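(* Let $n>2$ and let $U$ be $F_{(n_1,\dots,n_\ell)}$ with $n_1\cdots n_\ell=n$, or more generally any $n\times n$ unitary matrix all of whose first-row entries equal $1/\sqrt n$. Then: (1) The ideal heralding rate is $$h_n(0)=\left(\frac{-1}{n}\right)^{n-1}(n-1)!\sum_{t=0}^{n-1}(n-t)\frac{(-n)^t}{t!}={}_2F_0\!\left(-(n-1),2;\tfrac1n\right),$$ where ${}_2F_0(a,b;z)=\sum_{j\ge0}\frac{(a)_j(b)_j}{j!}z^j$ and $(a)_j=a(a+1)\cdots(a+j-1)$. (2) $\lim_{n\to\infty}h_n(0)=\tfrac14$.
   Context: Here $F_m=\frac1{\sqrt m}(e^{2\pi ijk/m})_{j,k}$, $F_{(n_1,\dots,n_\ell)}=F_{n_1}\otimes\cdots\otimes F_{n_\ell}$ with modes labelled so that $|m_1\rangle\otimes\cdots\otimes|m_\ell\rangle$ is mode $m_1+n_1m_2+\cdots+(n_1\cdots n_{\ell-1})m_\ell$. For an $n\times n$ unitary $U$, $\hat U$ is the induced linear optical unitary on $n$ bosons in $n$ modes ($a_j^\dagger\mapsto\sum_iU_{ij}a_i^\dagger$), and $|s_0,\dots,s_{n-1}\rangle$ denotes Fock states. An ideal pattern is $(s_0,\dots,s_{n-1})$ with $\sum s_i=n$, $s_0=1$ and $\langle s_0,\dots,s_{n-1}|\hat U|1,\dots,1\rangle\ne0$. The ideal heralding rate is $h_n(0)=\sum_{s\text{ ideal}}|\langle s|\hat U|1,\dots,1\rangle|^2$, the probability that measuring the photon numbers of $\hat U|1,\dots,1\rangle$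 in all modes yields an ideal pattern. *)

theory Defs
  imports "HOL-Analysis.Analysis" "HOL-Library.FuncSet"
begin

text \<open>An n x n complex matrix is represented as a function nat => nat => complex,
  entries U i j with i, j < n (i = row = output mode, j = column = input mode).
  Unitary: U U^* = I and U^* U = I.\<close>
definition unitary_mat :: "nat \<Rightarrow> (nat \<Rightarrow> nat \<Rightarrow> complex) \<Rightarrow> bool" where
  "unitary_mat n U \<longleftrightarrow>
     (\<forall>i<n. \<forall>j<n. (\<Sum>k<n. U i k * cnj (U j k)) = (if i = j then 1 else 0)) \<and>
     (\<forall>i<n. \<forall>j<n. (\<Sum>k<n. cnj (U k i) * U k j) = (if i = j then 1 else 0))"

text \<open>Fock-state amplitude <s_0,...,s_{n-1}| \<hat>U |1,...,1>.  Expanding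
  \<hat>U |1..1> = prod_j (sum_i U i j a_i^dagger) |0> over all assignments f of the
  input photons j to output modes f j, and using (a^dagger)^k |0> = sqrt(k!) |k>,
  the amplitude is sqrt(prod_i s_i!) times the sum over the assignments f whose
  occupation numbers are s.\<close>
definition fock_amp :: "nat \<Rightarrow> (nat \<Rightarrow> nat \<Rightarrow> complex) \<Rightarrow> (nat \<Rightarrow> nat) \<Rightarrow> complex" where
  "fock_amp n U s =
     complex_of_real (sqrt (\<Prod>i<n. fact (s i))) *
     (\<Sum>f \<in> {f \<in> {..<n} \<rightarrow>\<^sub>E {..<n}. \<forall>i<n. card {j. j < n \<and> f j = i} = s i}.
        \<Prod>j<n. U (f j) j)"

definition patterns :: "nat \<Rightarrow> (nat \<Rightarrow> nat) set" where
  "patterns n = {s. (\<forall>i\<ge>n. s i = 0) \<and> (\<Sum>i<n. s i) = n}"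

definition ideal_patterns :: "nat \<Rightarrow> (nat \<Rightarrow> nat \<Rightarrow> complex) \<Rightarrow> (nat \<Rightarrow> nat) set" where
  "ideal_patterns n U = {s \<in> patterns n. s 0 = 1 \<and> fock_amp n U s \<noteq> 0}"

definition heralding_rate :: "nat \<Rightarrow> (nat \<Rightarrow> nat \<Rightarrow> complex) \<Rightarrow> real" where
  "heralding_rate n U = (\<Sum>s \<in> ideal_patterns n U. (cmod (fock_amp n U s))\<^sup>2)"

definition hyp2F0 :: "real \<Rightarrow> real \<Rightarrow> real \<Rightarrow> real" where
  "hyp2F0 a b z = (\<Sum>j. pochhammer a j * pochhammer b j / fact j * z ^ j)"

definition dft :: "nat \<Rightarrow> nat \<Rightarrow> nat \<Rightarrow> complex" where
  "dft m j k = exp (2 * pi * \<i> * of_nat (j * k) / of_nat m) / complex_of_real (sqrt m)"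

end

theory Submission
  imports Defs "HOL-Probability.Distributions" "HOL-Combinatorics.Permutations"
begin

definition fib :: "nat \<Rightarrow> (nat \<Rightarrow> nat) \<Rightarrow> nat \<Rightarrow> nat set" where
  "fib n f i = {j. j < n \<and> f j = i}"

lemma fib_finite[simp]: "finite (fib n f i)" unfolding fib_def by auto

lemma stab_card:
  assumes f: "f \<in> {..<n} \<rightarrow>\<^sub>E {..<n}"
  shows "card {\<tau>. \<tau> permutes {..<n} \<and> (\<forall>j<n. f (\<tau> j) = f j)} = (\<Prod>i<n. fact (card (fib n f i)))"
proof -
  let ?S = "{\<tau>. \<tau> permutes {..<n} \<and> (\<forall>j<n. f (\<tau> j) = f j)}"
  let ?P = "PiE {..<n} (\<lambda>i. {p. p permutes fib n f i})"
  let ?Phi = "\<lambda>\<tau>. \<lambda>i\<in>{..<n}. (\<lambda>j. if j \<in> fib n f i then \<tau> j else j)"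
  let ?Psi = "\<lambda>\<rho> j. if j < n then \<rho> (f j) j else j"
  have fj: "j < n \<Longrightarrow> f j < n" for j using f by auto
  have "bij_betw ?Phi ?S ?P"
  proof (rule bij_betw_byWitness[where f' = ?Psi])
    show "\<forall>\<tau>\<in>?S. ?Psi (?Phi \<tau>) = \<tau>"
    proof
      fix \<tau> assume t: "\<tau> \<in> ?S"
      show "?Psi (?Phi \<tau>) = \<tau>"
      proof
        fix j show "?Psi (?Phi \<tau>) j = \<tau> j"
          using t fj[of j] by (auto simp: fib_def permutes_not_in)
      qed
    qed
    show "\<forall>\<rho>\<in>?P. ?Phi (?Psi \<rho>) = \<rho>"
    proof
      fix \<rho> assume r: "\<rho> \<in> ?P"
      show "?Phi (?Psi \<rho>) = \<rho>"
      proof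
        fix i show "?Phi (?Psi \<rho>) i = \<rho> i"
        proof (cases "i < n")
          case True
          have pi: "\<rho> i permutes fib n f i" using r True by auto
          show ?thesis
          proof
            fix j show "?Phi (?Psi \<rho>) i j = \<rho> i j"
              using True pi by (auto simp: fib_def permutes_not_in)
          qed
        next
          case False then show ?thesis using r by (auto simp: PiE_def extensional_def)
        qed
      qed
    qed
    show "?Phi ` ?S \<subseteq> ?P"
    proof
      fix x assume "x \<in> ?Phi ` ?S"
      then obtain \<tau> where t: "\<tau> \<in> ?S" and x: "x = ?Phi \<tau>" by blast
      have tp: "\<tau> permutes {..<n}" and tf: "\<And>j. j<n \<Longrightarrow> f (\<tau> j) = f j" using t by auto
      have "(\<lambda>j. if j \<in> fib n f i then \<tau> j else j) permutes fib n f i" if i: "i < n" for i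
      proof (rule inj_imp_permutes)
        show "inj_on (\<lambda>j. if j \<in> fib n f i then \<tau> j else j) (fib n f i)"
          using permutes_inj[OF tp] by (auto simp: inj_on_def inj_def)
        show "finite (fib n f i)" by simp
        show "(if j \<in> fib n f i then \<tau> j else j) \<in> fib n f i" if "j \<in> fib n f i" for j
          using that tf permutes_in_image[OF tp] by (auto simp: fib_def)
        show "(if j \<in> fib n f i then \<tau> j else j) = j" if "j \<notin> fib n f i" for j
          using that by simp
      qed
      then show "x \<in> ?P" unfolding x by auto
    qed
    show "?Psi ` ?P \<subseteq> ?S"
    proof
      fix x assume "x \<in> ?Psi ` ?P"
      then obtain \<rho> where r: "\<rho> \<in> ?P" and x: "x = ?Psi \<rho>" by blast
      have pi: "\<And>i. i < n \<Longrightarrow> \<rho> i permutes fib n f i" using r by auto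
      have inf: "\<rho> (f j) j \<in> fib n f (f j)" if j: "j < n" for j
      proof -
        have p: "\<rho> (f j) permutes fib n f (f j)" by (rule pi[OF fj[OF j]])
        have "j \<in> fib n f (f j)" unfolding fib_def using j by blast
        then show ?thesis by (rule iffD2[OF permutes_in_image[OF p]])
      qed
      have inf2: "\<rho> (f j) j < n \<and> f (\<rho> (f j) j) = f j" if j: "j < n" for j
        using inf[OF j] unfolding fib_def by blast
      have "?Psi \<rho> permutes {..<n}"
      proof (rule inj_imp_permutes)
        show "inj_on (?Psi \<rho>) {..<n}"
        proof (rule inj_onI)
          fix a b assume a: "a \<in> {..<n}" and b: "b \<in> {..<n}" and e: "?Psi \<rho> a = ?Psi \<rho> b"
          have e': "\<rho> (f a) a = \<rho> (f b) b" using e a b by simp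
          have "f a = f b" using inf2[of a] inf2[of b] a b e' by (metis lessThan_iff)
          moreover have ia: "a < n" using a by simp
          moreover have "inj (\<rho> (f a))" by (rule permutes_inj[OF pi[OF fj[OF ia]]])
          ultimately show "a = b" using e' by (metis injD)
        qed
        show "finite {..<n}" by simp
        show "?Psi \<rho> j \<in> {..<n}" if "j \<in> {..<n}" for j using inf2[of j] that by simp
        show "?Psi \<rho> j = j" if "j \<notin> {..<n}" for j using that by simp
      qed
      moreover have "f (?Psi \<rho> j) = f j" if "j < n" for j using inf2[of j] that by simp
      ultimately show "x \<in> ?S" unfolding x by auto
    qed
  qed
  then have "card ?S = card ?P" by (rule bij_betw_same_card)
  also have "\<dots> = (\<Prod>i<n. card {p. p permutes fib n f i})" by (simp add: card_PiE)
  also have "\<dots> = (\<Prod>i<n. fact (card (fib n f i)))"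
    by (intro prod.cong refl card_permutations) auto
  finally show ?thesis .
qed

lemma exists_sigma0:
  assumes f: "f \<in> {..<n} \<rightarrow>\<^sub>E {..<n}" and g: "g \<in> {..<n} \<rightarrow>\<^sub>E {..<n}"
    and c: "\<And>i. i < n \<Longrightarrow> card (fib n g i) = card (fib n f i)"
  shows "\<exists>\<sigma>. \<sigma> permutes {..<n} \<and> (\<forall>j<n. f (\<sigma> j) = g j)"
proof -
  have ex: "\<exists>b. bij_betw b (fib n g i) (fib n f i)" if i: "i < n" for i
    by (rule finite_same_card_bij[OF fib_finite fib_finite c[OF i]])
  have "\<forall>i. \<exists>b. i < n \<longrightarrow> bij_betw b (fib n g i) (fib n f i)"
    using ex by blast
  from choice[OF this] obtain b where b0: "\<forall>i. i < n \<longrightarrow> bij_betw (b i) (fib n g i) (fib n f i)"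
    by blast
  have b: "bij_betw (b i) (fib n g i) (fib n f i)" if "i < n" for i using b0 that by blast
  have gj: "j < n \<Longrightarrow> g j < n" for j using g by auto
  have inb: "b (g j) j \<in> fib n f (g j)" if j: "j < n" for j
  proof -
    have "j \<in> fib n g (g j)" unfolding fib_def using j by blast
    then show ?thesis using bij_betwE[OF b[OF gj[OF j]]] by blast
  qed
  have inb2: "b (g j) j < n \<and> f (b (g j) j) = g j" if j: "j < n" for j
    using inb[OF j] unfolding fib_def by blast
  let ?s = "\<lambda>j. if j < n then b (g j) j else j"
  have "?s permutes {..<n}"
  proof (rule inj_imp_permutes)
    show "inj_on ?s {..<n}"
    proof (rule inj_onI)
      fix x y assume x: "x \<in> {..<n}" and y: "y \<in> {..<n}" and e: "?s x = ?s y"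
      have e': "b (g x) x = b (g y) y" using e x y by simp
      have ix0: "x < n" and iy0: "y < n" using x y by auto
      have "g x = f (b (g x) x)" using inb2[OF ix0] by simp
      also have "\<dots> = f (b (g y) y)" using e' by simp
      also have "\<dots> = g y" using inb2[OF iy0] by simp
      finally have gxy: "g x = g y" .
      have ix: "x < n" using x by simp
      have "inj_on (b (g x)) (fib n g (g x))" using bij_betw_imp_inj_on[OF b[OF gj[OF ix]]] .
      moreover have "x \<in> fib n g (g x)" "y \<in> fib n g (g x)" using x y gxy unfolding fib_def by auto
      moreover have "b (g x) x = b (g x) y" using e' gxy by simp
      ultimately show "x = y" by (simp add: inj_on_def)
    qed
    show "finite {..<n}" by simp
    show "?s j \<in> {..<n}" if "j \<in> {..<n}" for j using inb2[of j] that by simp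
    show "?s j = j" if "j \<notin> {..<n}" for j using that by simp
  qed
  moreover have "\<forall>j<n. f (?s j) = g j" using inb2 by simp
  ultimately show ?thesis by blast
qed

lemma count_perm:
  assumes f: "f \<in> {..<n} \<rightarrow>\<^sub>E {..<n}" and g: "g \<in> {..<n} \<rightarrow>\<^sub>E {..<n}"
    and c: "\<And>i. i < n \<Longrightarrow> card (fib n g i) = card (fib n f i)"
  shows "card {\<sigma>. \<sigma> permutes {..<n} \<and> (\<forall>j<n. f (\<sigma> j) = g j)} = (\<Prod>i<n. fact (card (fib n f i)))"
proof -
  obtain s0 where s0: "s0 permutes {..<n}" and s0f: "\<And>j. j<n \<Longrightarrow> f (s0 j) = g j"
    using exists_sigma0[OF f g c] by blast
  let ?St = "{\<tau>. \<tau> permutes {..<n} \<and> (\<forall>j<n. f (\<tau> j) = f j)}"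
  let ?G = "{\<sigma>. \<sigma> permutes {..<n} \<and> (\<forall>j<n. f (\<sigma> j) = g j)}"
  have "?G = (\<lambda>\<tau>. \<tau> \<circ> s0) ` ?St"
  proof
    show "(\<lambda>\<tau>. \<tau> \<circ> s0) ` ?St \<subseteq> ?G"
    proof
      fix x assume "x \<in> (\<lambda>\<tau>. \<tau> \<circ> s0) ` ?St"
      then obtain \<tau> where t: "\<tau> permutes {..<n}" "\<And>j. j<n \<Longrightarrow> f (\<tau> j) = f j" and x: "x = \<tau> \<circ> s0"
        by blast
      have "x permutes {..<n}" unfolding x by (rule permutes_compose[OF s0 t(1)])
      moreover have "f (x j) = g j" if j: "j < n" for j
      proof -
        have "s0 j < n" using permutes_in_image[OF s0] j by simp
        then show ?thesis unfolding x using t(2) s0f j by simp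
      qed
      ultimately show "x \<in> ?G" by blast
    qed
    show "?G \<subseteq> (\<lambda>\<tau>. \<tau> \<circ> s0) ` ?St"
    proof
      fix \<sigma> assume "\<sigma> \<in> ?G"
      then have sp: "\<sigma> permutes {..<n}" and sf: "\<And>j. j<n \<Longrightarrow> f (\<sigma> j) = g j" by auto
      let ?t = "\<sigma> \<circ> inv s0"
      have tp: "?t permutes {..<n}" by (rule permutes_compose[OF permutes_inv[OF s0] sp])
      have tf: "f (?t j) = f j" if j: "j < n" for j
      proof -
        have k: "inv s0 j < n" using permutes_in_image[OF permutes_inv[OF s0]] j by simp
        have "s0 (inv s0 j) = j" using permutes_inverses(1)[OF s0] by simp
        then show ?thesis using sf[OF k] s0f[OF k] by simp
      qed
      have "?t \<circ> s0 = \<sigma>" using permutes_inv_o(2)[OF s0] by (simp add: o_assoc[symmetric])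
      moreover have "?t \<in> ?St" using tp tf by blast
      ultimately show "\<sigma> \<in> (\<lambda>\<tau>. \<tau> \<circ> s0) ` ?St" by (rule image_eqI[OF sym])
    qed
  qed
  moreover have "inj_on (\<lambda>\<tau>. \<tau> \<circ> s0) ?St"
  proof (rule inj_onI)
    fix a b assume "a \<circ> s0 = b \<circ> s0"
    then have "a \<circ> s0 \<circ> inv s0 = b \<circ> s0 \<circ> inv s0" by simp
    then show "a = b" using permutes_inv_o(1)[OF s0] by (simp add: o_assoc[symmetric])
  qed
  ultimately have "card ?G = card ?St" by (simp add: card_image)
  also have "\<dots> = (\<Prod>i<n. fact (card (fib n f i)))" by (rule stab_card[OF f])
  finally show ?thesis .
qed

definition PP :: "(nat \<Rightarrow> nat \<Rightarrow> complex) \<Rightarrow> nat \<Rightarrow> (nat \<Rightarrow> nat) \<Rightarrow> complex" where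
  "PP U n f = (\<Prod>j<n. U (f j) j)"

definition occ :: "nat \<Rightarrow> (nat \<Rightarrow> nat) \<Rightarrow> nat \<Rightarrow> nat" where
  "occ n f = (\<lambda>i. if i < n then card (fib n f i) else 0)"

lemma comp_perm_in:
  assumes f: "f \<in> {..<n} \<rightarrow>\<^sub>E {..<n}" and s: "\<sigma> permutes {..<n}"
  shows "f \<circ> \<sigma> \<in> {..<n} \<rightarrow>\<^sub>E {..<n}"
proof -
  have "f (\<sigma> j) \<in> {..<n}" if "j < n" for j
  proof -
    have "\<sigma> j \<in> {..<n}" using permutes_in_image[OF s] that by simp
    then show ?thesis using f by blast
  qed
  moreover have "f (\<sigma> j) = undefined" if "\<not> j < n" for j
  proof -
    have "\<sigma> j = j" using permutes_not_in[OF s] that by simp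
    then show ?thesis using f that by (simp add: PiE_def extensional_def)
  qed
  ultimately show ?thesis by (auto simp: PiE_def extensional_def)
qed

lemma fib_comp_card:
  assumes s: "\<sigma> permutes {..<n}"
  shows "card (fib n (f \<circ> \<sigma>) i) = card (fib n f i)"
proof -
  have "bij_betw \<sigma> (fib n (f \<circ> \<sigma>) i) (fib n f i)"
  proof (rule bij_betw_imageI)
    show "inj_on \<sigma> (fib n (f \<circ> \<sigma>) i)" using permutes_inj[OF s] by (simp add: inj_on_def inj_def)
    show "\<sigma> ` fib n (f \<circ> \<sigma>) i = fib n f i"
    proof
      show "\<sigma> ` fib n (f \<circ> \<sigma>) i \<subseteq> fib n f i"
      proof
        fix k assume "k \<in> \<sigma> ` fib n (f \<circ> \<sigma>) i"
        then obtain j where j: "j < n" "f (\<sigma> j) = i" and k: "k = \<sigma> j" unfolding fib_def by auto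
        have "\<sigma> j < n" using permutes_in_image[OF s] j by simp
        then show "k \<in> fib n f i" using j k unfolding fib_def by simp
      qed
      show "fib n f i \<subseteq> \<sigma> ` fib n (f \<circ> \<sigma>) i"
      proof
        fix k assume "k \<in> fib n f i"
        then have k: "k < n" "f k = i" unfolding fib_def by auto
        have j: "inv \<sigma> k < n" using permutes_in_image[OF permutes_inv[OF s]] k by simp
        have e: "\<sigma> (inv \<sigma> k) = k" using permutes_inverses(1)[OF s] by simp
        have "inv \<sigma> k \<in> fib n (f \<circ> \<sigma>) i" using j e k unfolding fib_def by simp
        then show "k \<in> \<sigma> ` fib n (f \<circ> \<sigma>) i" using e by (metis image_eqI)
      qed
    qed
  qed
  then show ?thesis by (rule bij_betw_same_card)
qed

lemma lemma_L:
  assumes f: "f \<in> {..<n} \<rightarrow>\<^sub>E {..<n}"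
  shows "(\<Sum>\<sigma>\<in>{\<sigma>. \<sigma> permutes {..<n}}. PP U n (f \<circ> \<sigma>)) =
     of_nat (\<Prod>i<n. fact (card (fib n f i))) * (\<Sum>g\<in>{g\<in>{..<n} \<rightarrow>\<^sub>E {..<n}. occ n g = occ n f}. PP U n g)"
proof -
  let ?S = "{\<sigma>. \<sigma> permutes {..<n}}"
  let ?T = "{g\<in>{..<n} \<rightarrow>\<^sub>E {..<n}. occ n g = occ n f}"
  have fS: "finite ?S" by (rule finite_permutations) simp
  have fT: "finite ?T" by (rule finite_subset[of _ "{..<n} \<rightarrow>\<^sub>E {..<n}"]) (auto intro: finite_PiE)
  have occ_comp: "occ n (f \<circ> \<sigma>) = occ n f" if "\<sigma> permutes {..<n}" for \<sigma>
    unfolding occ_def using fib_comp_card[OF that] by auto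
  have img: "(\<lambda>\<sigma>. f \<circ> \<sigma>) ` ?S \<subseteq> ?T"
    using comp_perm_in[OF f] occ_comp by blast
  have "(\<Sum>\<sigma>\<in>?S. PP U n (f \<circ> \<sigma>)) = (\<Sum>g\<in>?T. \<Sum>\<sigma>\<in>{\<sigma>\<in>?S. f \<circ> \<sigma> = g}. PP U n (f \<circ> \<sigma>))"
    by (rule sum.group[OF fS fT img, symmetric])
  also have "\<dots> = (\<Sum>g\<in>?T. of_nat (\<Prod>i<n. fact (card (fib n f i))) * PP U n g)"
  proof (rule sum.cong[OF refl])
    fix g assume g: "g \<in> ?T"
    have gF: "g \<in> {..<n} \<rightarrow>\<^sub>E {..<n}" using g by blast
    have eqset: "{\<sigma>\<in>?S. f \<circ> \<sigma> = g} = {\<sigma>. \<sigma> permutes {..<n} \<and> (\<forall>j<n. f (\<sigma> j) = g j)}"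
    proof (intro Collect_cong iffI)
      fix \<sigma> assume "\<sigma> \<in> ?S \<and> f \<circ> \<sigma> = g" then show "\<sigma> permutes {..<n} \<and> (\<forall>j<n. f (\<sigma> j) = g j)"
        by (auto simp: fun_eq_iff)
    next
      fix \<sigma> assume a: "\<sigma> permutes {..<n} \<and> (\<forall>j<n. f (\<sigma> j) = g j)"
      have "f \<circ> \<sigma> = g"
      proof
        fix j show "(f \<circ> \<sigma>) j = g j"
        proof (cases "j < n")
          case True then show ?thesis using a by simp
        next
          case False
          have "\<sigma> j = j" using permutes_not_in[of \<sigma> "{..<n}" j] a False by simp
          then show ?thesis using False f gF by (simp add: PiE_def extensional_def)
        qed
      qed
      then show "\<sigma> \<in> ?S \<and> f \<circ> \<sigma> = g" using a by simp
    qed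
    have c: "card (fib n g i) = card (fib n f i)" if "i < n" for i
    proof -
      have "occ n g i = occ n f i" using g by simp
      then show ?thesis using that unfolding occ_def by simp
    qed
    have "(\<Sum>\<sigma>\<in>{\<sigma>\<in>?S. f \<circ> \<sigma> = g}. PP U n (f \<circ> \<sigma>)) = (\<Sum>\<sigma>\<in>{\<sigma>\<in>?S. f \<circ> \<sigma> = g}. PP U n g)"
      by (intro sum.cong refl) simp
    also have "\<dots> = of_nat (card {\<sigma>\<in>?S. f \<circ> \<sigma> = g}) * PP U n g" by simp
    also have "card {\<sigma>\<in>?S. f \<circ> \<sigma> = g} = (\<Prod>i<n. fact (card (fib n f i)))"
      unfolding eqset by (rule count_perm[OF f gF c])
    finally show "(\<Sum>\<sigma>\<in>{\<sigma>\<in>?S. f \<circ> \<sigma> = g}. PP U n (f \<circ> \<sigma>)) = of_nat (\<Prod>i<n. fact (card (fib n f i))) * PP U n g" .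
  qed
  also have "\<dots> = of_nat (\<Prod>i<n. fact (card (fib n f i))) * (\<Sum>g\<in>?T. PP U n g)"
    by (simp add: sum_distrib_left)
  finally show ?thesis .
qed


lemma exactly_one_zero:
  fixes a :: "nat \<Rightarrow> nat \<Rightarrow> complex"
  assumes n: "n \<ge> 1"
  shows "(\<Sum>f\<in>{f\<in>{..<n} \<rightarrow>\<^sub>E {..<n}. card (fib n f 0) = 1}. \<Prod>k<n. a k (f k)) =
         (\<Sum>j0<n. a j0 0 * (\<Prod>k\<in>{..<n}-{j0}. \<Sum>i\<in>{..<n}-{0}. a k i))"
proof -
  define B :: "nat \<Rightarrow> nat \<Rightarrow> nat set" where "B = (\<lambda>j0 k. if k = j0 then {0::nat} else {..<n}-{0})"
  have S1: "{f\<in>{..<n} \<rightarrow>\<^sub>E {..<n}. card (fib n f 0) = 1} = (\<Union>j0\<in>{..<n}. PiE {..<n} (B j0))"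
  proof (intro set_eqI iffI)
    fix f assume "f \<in> {f\<in>{..<n} \<rightarrow>\<^sub>E {..<n}. card (fib n f 0) = 1}"
    then have fF: "f \<in> {..<n} \<rightarrow>\<^sub>E {..<n}" and c: "card (fib n f 0) = 1" by auto
    from c obtain j0 where j0: "fib n f 0 = {j0}" by (metis One_nat_def card_1_singleton_iff)
    have j0n: "j0 < n" and fj0: "f j0 = 0" using j0 unfolding fib_def by auto
    have oth: "f k \<noteq> 0" if "k < n" "k \<noteq> j0" for k
    proof
      assume "f k = 0"
      then have "k \<in> fib n f 0" using that unfolding fib_def by simp
      then show False using j0 that by simp
    qed
    have "f \<in> PiE {..<n} (B j0)"
      using fF fj0 oth unfolding B_def by (auto simp: PiE_def Pi_def)
    then show "f \<in> (\<Union>j0\<in>{..<n}. PiE {..<n} (B j0))" using j0n by blast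
  next
    fix f assume "f \<in> (\<Union>j0\<in>{..<n}. PiE {..<n} (B j0))"
    then obtain j0 where j0n: "j0 < n" and fB: "f \<in> PiE {..<n} (B j0)" by blast
    have "f x < n" if "x < n" for x
    proof -
      have "f x \<in> B j0 x" using fB that by blast
      then show ?thesis using n unfolding B_def by (auto split: if_splits)
    qed
    then have fF: "f \<in> {..<n} \<rightarrow>\<^sub>E {..<n}" using fB by (auto simp: PiE_def Pi_def)
    have "fib n f 0 = {j0}"
    proof
      show "fib n f 0 \<subseteq> {j0}"
      proof
        fix k assume "k \<in> fib n f 0"
        then have "k < n" "f k = 0" unfolding fib_def by auto
        then have "f k \<in> B j0 k" using fB by blast
        then show "k \<in> {j0}" using \<open>f k = 0\<close> unfolding B_def by (auto split: if_splits)
      qed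
      have "f j0 \<in> B j0 j0" using fB j0n by blast
      then show "{j0} \<subseteq> fib n f 0" using j0n unfolding B_def fib_def by simp
    qed
    then show "f \<in> {f\<in>{..<n} \<rightarrow>\<^sub>E {..<n}. card (fib n f 0) = 1}" using fF by simp
  qed
  have disj: "\<forall>i\<in>{..<n}. \<forall>j\<in>{..<n}. i \<noteq> j \<longrightarrow> PiE {..<n} (B i) \<inter> PiE {..<n} (B j) = {}"
  proof (intro ballI impI)
    fix i j assume i: "i \<in> {..<n}" and j: "j \<in> {..<n}" and ij: "i \<noteq> j"
    show "PiE {..<n} (B i) \<inter> PiE {..<n} (B j) = {}"
    proof (rule ccontr)
      assume "PiE {..<n} (B i) \<inter> PiE {..<n} (B j) \<noteq> {}"
      then obtain f where "f \<in> PiE {..<n} (B i)" "f \<in> PiE {..<n} (B j)" by blast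
      then have "f i \<in> B i i" "f i \<in> B j i" using i by blast+
      then show False using ij unfolding B_def by simp
    qed
  qed
  have finB: "finite (B j k)" for j k unfolding B_def by simp
  have "(\<Sum>f\<in>{f\<in>{..<n} \<rightarrow>\<^sub>E {..<n}. card (fib n f 0) = 1}. \<Prod>k<n. a k (f k)) =
        (\<Sum>j0<n. \<Sum>f\<in>PiE {..<n} (B j0). \<Prod>k<n. a k (f k))"
    unfolding S1 by (rule sum.UNION_disjoint[OF _ _ disj]) (simp_all add: finite_PiE finB)
  also have "\<dots> = (\<Sum>j0<n. \<Prod>k<n. \<Sum>i\<in>B j0 k. a k i)"
    by (intro sum.cong refl prod_sum_PiE[symmetric]) (auto intro: finB)
  also have "\<dots> = (\<Sum>j0<n. a j0 0 * (\<Prod>k\<in>{..<n}-{j0}. \<Sum>i\<in>{..<n}-{0}. a k i))"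
  proof (rule sum.cong[OF refl])
    fix j0 assume j0: "j0 \<in> {..<n}"
    have "(\<Prod>k<n. \<Sum>i\<in>B j0 k. a k i) = (\<Sum>i\<in>B j0 j0. a j0 i) * (\<Prod>k\<in>{..<n}-{j0}. \<Sum>i\<in>B j0 k. a k i)"
      by (rule prod.remove[OF _ j0]) simp
    also have "(\<Prod>k\<in>{..<n}-{j0}. \<Sum>i\<in>B j0 k. a k i) = (\<Prod>k\<in>{..<n}-{j0}. \<Sum>i\<in>{..<n}-{0}. a k i)"
      by (intro prod.cong refl) (simp add: B_def)
    finally show "(\<Prod>k<n. \<Sum>i\<in>B j0 k. a k i) = a j0 0 * (\<Prod>k\<in>{..<n}-{j0}. \<Sum>i\<in>{..<n}-{0}. a k i)"
      by (simp add: B_def)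
  qed
  finally show ?thesis .
qed

lemma sum_pow_card:
  fixes h :: "nat \<Rightarrow> 'a::comm_ring_1"
  assumes "finite M"
  shows "(\<Sum>X\<in>Pow M. h (card X)) = (\<Sum>m\<le>card M. of_nat (card M choose m) * h m)"
proof -
  have "card X \<le> card M" if "X \<subseteq> M" for X using card_mono[OF assms that] .
  then have img: "card ` Pow M \<subseteq> {..card M}" by auto
  have "(\<Sum>X\<in>Pow M. h (card X)) = (\<Sum>m\<le>card M. \<Sum>X\<in>{X\<in>Pow M. card X = m}. h (card X))"
    by (rule sum.group[OF _ _ img, symmetric]) (use assms in auto)
  also have "\<dots> = (\<Sum>m\<le>card M. of_nat (card M choose m) * h m)"
  proof (rule sum.cong[OF refl])
    fix m
    have "(\<Sum>X\<in>{X\<in>Pow M. card X = m}. h (card X)) = (\<Sum>X\<in>{X\<in>Pow M. card X = m}. h m)" by simp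
    also have "\<dots> = of_nat (card {X\<in>Pow M. card X = m}) * h m" by simp
    also have "card {X\<in>Pow M. card X = m} = card M choose m"
    proof -
      have "{X\<in>Pow M. card X = m} = {B. B \<subseteq> M \<and> card B = m}" by auto
      then show ?thesis using n_subsets[OF assms] by simp
    qed
    finally show "(\<Sum>X\<in>{X\<in>Pow M. card X = m}. h (card X)) = of_nat (card M choose m) * h m" .
  qed
  finally show ?thesis .
qed

lemma perm_fix_card:
  assumes X: "X \<subseteq> {..<n}"
  shows "card {\<sigma>. \<sigma> permutes {..<n} \<and> (\<forall>k\<in>X. \<sigma> k = k)} = fact (n - card X)"
proof -
  have "{\<sigma>. \<sigma> permutes {..<n} \<and> (\<forall>k\<in>X. \<sigma> k = k)} = {\<sigma>. \<sigma> permutes ({..<n} - X)}"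
  proof (intro Collect_cong)
    fix \<sigma>
    show "(\<sigma> permutes {..<n} \<and> (\<forall>k\<in>X. \<sigma> k = k)) = (\<sigma> permutes ({..<n} - X))"
      unfolding permutes_def using X by auto
  qed
  also have "card \<dots> = fact (card ({..<n} - X))" by (rule card_permutations) auto
  also have "card ({..<n} - X) = n - card X" using X by (simp add: card_Diff_subset finite_subset)
  finally show ?thesis .
qed

definition VV :: "nat \<Rightarrow> real" where
  "VV n = (\<Sum>m\<le>n-1. real ((n-1) choose m) * fact (n-m) * (-1/real n)^(n-1-m))"

lemma prod_ind:
  assumes "finite X"
  shows "(\<Prod>k\<in>X. (if \<sigma> k = k then 1 else 0 :: complex)) = (if \<forall>k\<in>X. \<sigma> k = k then 1 else 0)"
proof (cases "\<forall>k\<in>X. \<sigma> k = k")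
  case True then show ?thesis by simp
next
  case False
  then obtain k where "k \<in> X" "\<sigma> k \<noteq> k" by blast
  then have "(\<Prod>k\<in>X. (if \<sigma> k = k then 1 else 0 :: complex)) = 0"
    by (intro prod_zero[OF assms]) auto
  then show ?thesis using False by simp
qed

lemma perm_sum:
  assumes n: "n \<ge> 1" and j0: "j0 < n"
  shows "(\<Sum>\<sigma>\<in>{\<sigma>. \<sigma> permutes {..<n}}. \<Prod>k\<in>{..<n}-{j0}. ((if \<sigma> k = k then 1 else 0) - 1 / of_nat n :: complex))
         = complex_of_real (VV n)"
proof -
  define M where "M = {..<n}-{j0}"
  define c :: complex where "c = - 1 / of_nat n"
  have fM: "finite M" unfolding M_def by simp
  have cM: "card M = n - 1" unfolding M_def using j0 by simp
  have MN: "M \<subseteq> {..<n}" unfolding M_def by auto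
  have fP: "finite {\<sigma>. \<sigma> permutes {..<n}}" by (rule finite_permutations) simp
  have "(\<Sum>\<sigma>\<in>{\<sigma>. \<sigma> permutes {..<n}}. \<Prod>k\<in>M. ((if \<sigma> k = k then 1 else 0) - 1 / of_nat n :: complex))
      = (\<Sum>\<sigma>\<in>{\<sigma>. \<sigma> permutes {..<n}}. \<Sum>X\<in>Pow M. (if \<forall>k\<in>X. \<sigma> k = k then 1 else 0) * c ^ (card M - card X))"
  proof (rule sum.cong[OF refl])
    fix \<sigma>
    have "(\<Prod>k\<in>M. ((if \<sigma> k = k then 1 else 0) - 1 / of_nat n :: complex)) =
          (\<Prod>k\<in>M. (if \<sigma> k = k then 1 else 0) + c)" unfolding c_def by simp
    also have "\<dots> = (\<Sum>X\<in>Pow M. (\<Prod>k\<in>X. (if \<sigma> k = k then 1 else 0 :: complex)) * (\<Prod>k\<in>M-X. c))"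
      by (rule prod_add[OF fM])
    also have "\<dots> = (\<Sum>X\<in>Pow M. (if \<forall>k\<in>X. \<sigma> k = k then 1 else 0) * c ^ (card M - card X))"
    proof (rule sum.cong[OF refl])
      fix X assume X: "X \<in> Pow M"
      then have fX: "finite X" using fM finite_subset by auto
      have "card (M - X) = card M - card X" using X fX by (simp add: card_Diff_subset)
      then show "(\<Prod>k\<in>X. (if \<sigma> k = k then 1 else 0 :: complex)) * (\<Prod>k\<in>M-X. c) =
             (if \<forall>k\<in>X. \<sigma> k = k then 1 else 0) * c ^ (card M - card X)"
        using prod_ind[OF fX, of \<sigma>] by simp
    qed
    finally show "(\<Prod>k\<in>M. ((if \<sigma> k = k then 1 else 0) - 1 / of_nat n :: complex)) =
          (\<Sum>X\<in>Pow M. (if \<forall>k\<in>X. \<sigma> k = k then 1 else 0) * c ^ (card M - card X))" .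
  qed
  also have "\<dots> = (\<Sum>X\<in>Pow M. \<Sum>\<sigma>\<in>{\<sigma>. \<sigma> permutes {..<n}}. (if \<forall>k\<in>X. \<sigma> k = k then 1 else 0) * c ^ (card M - card X))"
    by (rule sum.swap)
  also have "\<dots> = (\<Sum>X\<in>Pow M. of_nat (fact (n - card X)) * c ^ (n - 1 - card X))"
  proof (rule sum.cong[OF refl])
    fix X assume X: "X \<in> Pow M"
    then have XN: "X \<subseteq> {..<n}" using MN by auto
    have "(\<Sum>\<sigma>\<in>{\<sigma>. \<sigma> permutes {..<n}}. (if \<forall>k\<in>X. \<sigma> k = k then 1 else 0) * c ^ (card M - card X))
        = (\<Sum>\<sigma>\<in>{\<sigma>. \<sigma> permutes {..<n}}. (if \<forall>k\<in>X. \<sigma> k = k then c ^ (card M - card X) else 0))"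
      by (intro sum.cong refl) simp
    also have "\<dots> = (\<Sum>\<sigma>\<in>{\<sigma>\<in>{\<sigma>. \<sigma> permutes {..<n}}. \<forall>k\<in>X. \<sigma> k = k}. c ^ (card M - card X))"
      by (rule sum.inter_filter[OF fP, symmetric])
    also have "\<dots> = of_nat (card {\<sigma>\<in>{\<sigma>. \<sigma> permutes {..<n}}. \<forall>k\<in>X. \<sigma> k = k}) * c ^ (card M - card X)"
      by simp
    also have "card {\<sigma>\<in>{\<sigma>. \<sigma> permutes {..<n}}. \<forall>k\<in>X. \<sigma> k = k} = fact (n - card X)"
      using perm_fix_card[OF XN] by simp
    finally show "(\<Sum>\<sigma>\<in>{\<sigma>. \<sigma> permutes {..<n}}. (if \<forall>k\<in>X. \<sigma> k = k then 1 else 0) * c ^ (card M - card X))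
        = of_nat (fact (n - card X)) * c ^ (n - 1 - card X)" using cM by simp
  qed
  also have "\<dots> = (\<Sum>m\<le>card M. of_nat (card M choose m) * (of_nat (fact (n - m)) * c ^ (n - 1 - m)))"
    by (rule sum_pow_card[OF fM])
  also have "\<dots> = complex_of_real (VV n)"
    unfolding VV_def cM c_def by (simp add: of_real_sum mult.assoc)
  finally show ?thesis unfolding M_def .
qed


lemma sum_fib:
  assumes f: "f \<in> {..<n} \<rightarrow>\<^sub>E {..<n}"
  shows "(\<Sum>i<n. card (fib n f i)) = n"
proof -
  have img: "f ` {..<n} \<subseteq> {..<n}" using f by auto
  have "(\<Sum>i<n. \<Sum>x\<in>{x\<in>{..<n}. f x = i}. (1::nat)) = (\<Sum>x<n. 1)"
    by (rule sum.group[OF _ _ img]) auto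
  moreover have "{x\<in>{..<n}. f x = i} = fib n f i" for i unfolding fib_def by auto
  ultimately show ?thesis by simp
qed

lemma finite_patterns: "finite (patterns n)"
proof -
  have "patterns n \<subseteq> (\<lambda>g i. if i < n then g i else 0) ` ({..<n} \<rightarrow>\<^sub>E {..n})"
  proof
    fix s assume s: "s \<in> patterns n"
    then have s0: "\<And>i. i \<ge> n \<Longrightarrow> s i = 0" and ss: "(\<Sum>i<n. s i) = n" unfolding patterns_def by auto
    have le: "s i \<le> n" if "i < n" for i
    proof -
      have "s i \<le> (\<Sum>i<n. s i)" by (rule member_le_sum) (use that in auto)
      then show ?thesis using ss by simp
    qed
    have "restrict s {..<n} \<in> {..<n} \<rightarrow>\<^sub>E {..n}" using le by auto
    moreover have "s = (\<lambda>i. if i < n then restrict s {..<n} i else 0)"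
      using s0 by (auto simp: fun_eq_iff)
    ultimately show "s \<in> (\<lambda>g i. if i < n then g i else 0) ` ({..<n} \<rightarrow>\<^sub>E {..n})" by blast
  qed
  moreover have "finite ((\<lambda>g i. if i < n then g i else 0) ` ({..<n} \<rightarrow>\<^sub>E {..n}))"
    by (intro finite_imageI finite_PiE) auto
  ultimately show ?thesis by (rule finite_subset)
qed

lemma herald_eq:
  assumes n: "n \<ge> 1"
  shows "complex_of_real (heralding_rate n U) =
    (\<Sum>f\<in>{f\<in>{..<n} \<rightarrow>\<^sub>E {..<n}. card (fib n f 0) = 1}. PP U n f * cnj (\<Sum>\<sigma>\<in>{\<sigma>. \<sigma> permutes {..<n}}. PP U n (f \<circ> \<sigma>)))"
proof -
  define Q where "Q = {s\<in>patterns n. s 0 = 1}"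
  define S1 where "S1 = {f\<in>{..<n} \<rightarrow>\<^sub>E {..<n}. card (fib n f 0) = 1}"
  define FF where "FF = {..<n} \<rightarrow>\<^sub>E {..<n}"
  have fQ: "finite Q" unfolding Q_def using finite_patterns by simp
  have fS1: "finite S1" unfolding S1_def by (rule finite_subset[of _ "{..<n} \<rightarrow>\<^sub>E {..<n}"]) (auto intro: finite_PiE)
  have hr: "heralding_rate n U = (\<Sum>s\<in>Q. (cmod (fock_amp n U s))\<^sup>2)"
    unfolding heralding_rate_def
    by (rule sum.mono_neutral_left[OF fQ]) (auto simp: ideal_patterns_def Q_def)
  have cls: "{f \<in> {..<n} \<rightarrow>\<^sub>E {..<n}. \<forall>i<n. card {j. j < n \<and> f j = i} = s i} = {f\<in>FF. occ n f = s}"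
    if s: "s \<in> Q" for s
  proof -
    have s0: "\<And>i. i \<ge> n \<Longrightarrow> s i = 0" using s unfolding Q_def patterns_def by auto
    show ?thesis unfolding FF_def occ_def fib_def
    proof (intro Collect_cong conj_cong refl iffI)
      fix f assume "\<forall>i<n. card {j. j < n \<and> f j = i} = s i"
      then show "(\<lambda>i. if i < n then card {j. j < n \<and> f j = i} else 0) = s"
        using s0 by (auto simp: fun_eq_iff)
    next
      fix f assume a: "(\<lambda>i. if i < n then card {j. j < n \<and> f j = i} else 0) = s"
      show "\<forall>i<n. card {j. j < n \<and> f j = i} = s i"
      proof (intro allI impI)
        fix i assume "i < n"
        then show "card {j. j < n \<and> f j = i} = s i" using fun_cong[OF a, of i] by simp
      qed
    qed
  qed
  define A where "A = (\<lambda>s. \<Sum>f\<in>{f\<in>FF. occ n f = s}. PP U n f)"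
  have amp: "fock_amp n U s = complex_of_real (sqrt (\<Prod>i<n. fact (s i))) * A s" if "s \<in> Q" for s
    unfolding fock_amp_def A_def PP_def cls[OF that] by simp
  have "complex_of_real (heralding_rate n U) = (\<Sum>s\<in>Q. fock_amp n U s * cnj (fock_amp n U s))"
    unfolding hr of_real_sum complex_norm_square by simp
  also have "\<dots> = (\<Sum>s\<in>Q. \<Sum>f\<in>{f\<in>S1. occ n f = s}. PP U n f * cnj (\<Sum>\<sigma>\<in>{\<sigma>. \<sigma> permutes {..<n}}. PP U n (f \<circ> \<sigma>)))"
  proof (rule sum.cong[OF refl])
    fix s assume s: "s \<in> Q"
    have s01: "s 0 = 1" using s unfolding Q_def by simp
    have pos: "0 \<le> (\<Prod>i<n. fact (s i) :: real)" by (simp add: prod_nonneg)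
    have "fock_amp n U s * cnj (fock_amp n U s) = complex_of_real (\<Prod>i<n. fact (s i)) * (A s * cnj (A s))"
    proof -
      have "fock_amp n U s * cnj (fock_amp n U s) =
        (complex_of_real (sqrt (\<Prod>i<n. fact (s i))) * complex_of_real (sqrt (\<Prod>i<n. fact (s i)))) * (A s * cnj (A s))"
        unfolding amp[OF s] by (simp only: complex_cnj_mult complex_cnj_complex_of_real mult_ac)
      also have "complex_of_real (sqrt (\<Prod>i<n. fact (s i))) * complex_of_real (sqrt (\<Prod>i<n. fact (s i))) = complex_of_real (\<Prod>i<n. fact (s i) :: real)"
        unfolding of_real_mult[symmetric] using pos by simp
      finally show ?thesis .
    qed
    also have "\<dots> = (\<Sum>f\<in>{f\<in>FF. occ n f = s}. PP U n f * (complex_of_real (\<Prod>i<n. fact (s i)) * cnj (A s)))"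
    proof -
      have Aeq: "A s = (\<Sum>f\<in>{f\<in>FF. occ n f = s}. PP U n f)" by (simp add: A_def)
      have "complex_of_real (\<Prod>i<n. fact (s i)) * (A s * cnj (A s)) =
            A s * (complex_of_real (\<Prod>i<n. fact (s i)) * cnj (A s))" by (simp only: mult_ac)
      also have "\<dots> = (\<Sum>f\<in>{f\<in>FF. occ n f = s}. PP U n f) * (complex_of_real (\<Prod>i<n. fact (s i)) * cnj (A s))"
        by (simp only: Aeq[symmetric])
      finally show ?thesis by (simp only: sum_distrib_right)
    qed
    also have "\<dots> = (\<Sum>f\<in>{f\<in>S1. occ n f = s}. PP U n f * cnj (\<Sum>\<sigma>\<in>{\<sigma>. \<sigma> permutes {..<n}}. PP U n (f \<circ> \<sigma>)))"
    proof (rule sum.cong)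
      show "{f\<in>FF. occ n f = s} = {f\<in>S1. occ n f = s}"
      proof (intro Collect_cong iffI)
        fix f assume "f \<in> FF \<and> occ n f = s"
        moreover have "0 < n" using n by simp
        ultimately show "f \<in> S1 \<and> occ n f = s" using s01 unfolding S1_def FF_def occ_def
          by (auto simp: fun_eq_iff split: if_splits)
      next
        fix f assume "f \<in> S1 \<and> occ n f = s" then show "f \<in> FF \<and> occ n f = s" unfolding S1_def FF_def by auto
      qed
    next
      fix f assume f: "f \<in> {f\<in>S1. occ n f = s}"
      then have fF: "f \<in> {..<n} \<rightarrow>\<^sub>E {..<n}" and oc: "occ n f = s" unfolding S1_def by auto
      have si: "s i = card (fib n f i)" if "i < n" for i using oc that unfolding occ_def by auto
      have "(\<Prod>i<n. fact (s i) :: real) = of_nat (\<Prod>i<n. fact (card (fib n f i)))"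
        using si by (simp add: of_nat_prod)
      then have "complex_of_real (\<Prod>i<n. fact (s i)) * cnj (A s) =
         cnj (of_nat (\<Prod>i<n. fact (card (fib n f i))) * (\<Sum>g\<in>{g\<in>{..<n} \<rightarrow>\<^sub>E {..<n}. occ n g = occ n f}. PP U n g))"
        unfolding A_def FF_def oc by simp
      also have "\<dots> = cnj (\<Sum>\<sigma>\<in>{\<sigma>. \<sigma> permutes {..<n}}. PP U n (f \<circ> \<sigma>))"
        using lemma_L[OF fF, of U] by simp
      finally show "PP U n f * (complex_of_real (\<Prod>i<n. fact (s i)) * cnj (A s)) =
         PP U n f * cnj (\<Sum>\<sigma>\<in>{\<sigma>. \<sigma> permutes {..<n}}. PP U n (f \<circ> \<sigma>))" by simp
    qed
    finally show "fock_amp n U s * cnj (fock_amp n U s) =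
       (\<Sum>f\<in>{f\<in>S1. occ n f = s}. PP U n f * cnj (\<Sum>\<sigma>\<in>{\<sigma>. \<sigma> permutes {..<n}}. PP U n (f \<circ> \<sigma>)))" .
  qed
  also have "\<dots> = (\<Sum>f\<in>S1. PP U n f * cnj (\<Sum>\<sigma>\<in>{\<sigma>. \<sigma> permutes {..<n}}. PP U n (f \<circ> \<sigma>)))"
  proof (rule sum.group[OF fS1 fQ])
    show "occ n ` S1 \<subseteq> Q"
    proof
      fix s assume "s \<in> occ n ` S1"
      then obtain f where f: "f \<in> S1" and s: "s = occ n f" by blast
      have fF: "f \<in> {..<n} \<rightarrow>\<^sub>E {..<n}" and c1: "card (fib n f 0) = 1" using f unfolding S1_def by auto
      have "(\<Sum>i<n. s i) = n" unfolding s occ_def using sum_fib[OF fF] by simp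
      moreover have "\<forall>i\<ge>n. s i = 0" unfolding s occ_def by simp
      moreover have "s 0 = 1" unfolding s occ_def using c1 n by simp
      ultimately show "s \<in> Q" unfolding Q_def patterns_def by simp
    qed
  qed
  finally show ?thesis unfolding S1_def .
qed


lemma col_orth:
  assumes U: "unitary_mat n U" and m: "m < n" and k: "k < n"
  shows "(\<Sum>i<n. U i k * cnj (U i m)) = (if k = m then 1 else 0)"
proof -
  have "(\<Sum>i<n. cnj (U i m) * U i k) = (if m = k then 1 else 0)"
    using U m k unfolding unitary_mat_def by blast
  then show ?thesis by (simp add: mult.commute eq_commute)
qed

lemma U0_prod:
  assumes n: "n \<ge> 1" and row: "\<forall>k<n. U 0 k = complex_of_real (1 / sqrt (real n))"
    and k: "k < n" and m: "m < n"
  shows "U 0 k * cnj (U 0 m) = 1 / of_nat n"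
proof -
  have "U 0 k * cnj (U 0 m) = complex_of_real (1 / sqrt (real n) * (1 / sqrt (real n)))"
  proof -
    have a: "U 0 k = complex_of_real (1 / sqrt (real n))" "U 0 m = complex_of_real (1 / sqrt (real n))"
      using row k m by auto
    show ?thesis unfolding a by (simp only: complex_cnj_complex_of_real of_real_mult)
  qed
  also have "1 / sqrt (real n) * (1 / sqrt (real n)) = 1 / real n" using n by (simp add: real_sqrt_mult[symmetric])
  finally show ?thesis by (simp only: of_real_divide of_real_1 of_real_of_nat_eq)
qed

lemma a_eval:
  assumes U: "unitary_mat n U" and n: "n \<ge> 1" and row: "\<forall>k<n. U 0 k = complex_of_real (1 / sqrt (real n))"
    and s: "\<sigma> permutes {..<n}" and k: "k < n"
  shows "(\<Sum>i\<in>{..<n}-{0}. U i k * cnj (U i (inv \<sigma> k))) = (if \<sigma> k = k then 1 else 0) - 1 / of_nat n"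
proof -
  have ik: "inv \<sigma> k < n" using permutes_in_image[OF permutes_inv[OF s]] k by simp
  have iff: "(k = inv \<sigma> k) = (\<sigma> k = k)"
  proof
    assume "k = inv \<sigma> k"
    then have "\<sigma> k = \<sigma> (inv \<sigma> k)" by simp
    also have "\<dots> = k" using permutes_inverses(1)[OF s] by simp
    finally show "\<sigma> k = k" .
  next
    assume "\<sigma> k = k"
    then have "inv \<sigma> (\<sigma> k) = inv \<sigma> k" by simp
    then show "k = inv \<sigma> k" using permutes_inverses(2)[OF s] by simp
  qed
  have z: "0 \<in> {..<n}" using n by simp
  have "(\<Sum>i<n. U i k * cnj (U i (inv \<sigma> k))) = U 0 k * cnj (U 0 (inv \<sigma> k)) + (\<Sum>i\<in>{..<n}-{0}. U i k * cnj (U i (inv \<sigma> k)))"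
    by (rule sum.remove[OF _ z]) simp
  then have "(\<Sum>i\<in>{..<n}-{0}. U i k * cnj (U i (inv \<sigma> k))) = (\<Sum>i<n. U i k * cnj (U i (inv \<sigma> k))) - U 0 k * cnj (U 0 (inv \<sigma> k))"
    by simp
  also have "\<dots> = (if \<sigma> k = k then 1 else 0) - 1 / of_nat n"
    using col_orth[OF U ik k] U0_prod[of n U k "inv \<sigma> k", OF n row k ik] iff by simp
  finally show ?thesis .
qed

lemma main_value:
  assumes U: "unitary_mat n U" and n: "n \<ge> 1" and row: "\<forall>k<n. U 0 k = complex_of_real (1 / sqrt (real n))"
  shows "heralding_rate n U = VV n"
proof -
  define S1 where "S1 = {f\<in>{..<n} \<rightarrow>\<^sub>E {..<n}. card (fib n f 0) = 1}"
  define Pm where "Pm = {\<sigma>. \<sigma> permutes {..<n}}"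
  have fS1: "finite S1" unfolding S1_def by (rule finite_subset[of _ "{..<n} \<rightarrow>\<^sub>E {..<n}"]) (auto intro: finite_PiE)
  have fPm: "finite Pm" unfolding Pm_def by (rule finite_permutations) simp
  have termeq: "PP U n f * cnj (PP U n (f \<circ> \<sigma>)) = (\<Prod>k<n. U (f k) k * cnj (U (f k) (inv \<sigma> k)))"
    if s: "\<sigma> permutes {..<n}" for f \<sigma>
  proof -
    let ?g = "\<lambda>k. cnj (U (f k) (inv \<sigma> k))"
    have "(\<Prod>k<n. ?g k) = (\<Prod>k<n. (?g \<circ> \<sigma>) k)" by (rule prod.permute[OF s])
    also have "\<dots> = (\<Prod>j<n. cnj (U (f (\<sigma> j)) j))"
      using permutes_inverses(2)[OF s] by simp
    finally have "cnj (PP U n (f \<circ> \<sigma>)) = (\<Prod>k<n. ?g k)" unfolding PP_def by simp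
    then show ?thesis unfolding PP_def by (simp add: prod.distrib)
  qed
  have "complex_of_real (heralding_rate n U) = (\<Sum>f\<in>S1. PP U n f * cnj (\<Sum>\<sigma>\<in>Pm. PP U n (f \<circ> \<sigma>)))"
    unfolding S1_def Pm_def by (rule herald_eq[OF n])
  also have "\<dots> = (\<Sum>f\<in>S1. \<Sum>\<sigma>\<in>Pm. PP U n f * cnj (PP U n (f \<circ> \<sigma>)))"
    by (simp add: sum_distrib_left)
  also have "\<dots> = (\<Sum>\<sigma>\<in>Pm. \<Sum>f\<in>S1. PP U n f * cnj (PP U n (f \<circ> \<sigma>)))"
    by (rule sum.swap)
  also have "\<dots> = (\<Sum>\<sigma>\<in>Pm. \<Sum>j0<n. (1 / of_nat n) * (\<Prod>k\<in>{..<n}-{j0}. ((if \<sigma> k = k then 1 else 0) - 1 / of_nat n)))"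
  proof (rule sum.cong[OF refl])
    fix \<sigma> assume "\<sigma> \<in> Pm"
    then have s: "\<sigma> permutes {..<n}" unfolding Pm_def by simp
    have "(\<Sum>f\<in>S1. PP U n f * cnj (PP U n (f \<circ> \<sigma>))) = (\<Sum>f\<in>S1. \<Prod>k<n. U (f k) k * cnj (U (f k) (inv \<sigma> k)))"
      by (intro sum.cong refl termeq[OF s])
    also have "\<dots> = (\<Sum>j0<n. (U 0 j0 * cnj (U 0 (inv \<sigma> j0))) *
        (\<Prod>k\<in>{..<n}-{j0}. \<Sum>i\<in>{..<n}-{0}. U i k * cnj (U i (inv \<sigma> k))))"
      unfolding S1_def by (rule exactly_one_zero[OF n, of "\<lambda>k i. U i k * cnj (U i (inv \<sigma> k))"])
    also have "\<dots> = (\<Sum>j0<n. (1 / of_nat n) * (\<Prod>k\<in>{..<n}-{j0}. ((if \<sigma> k = k then 1 else 0) - 1 / of_nat n)))"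
    proof (rule sum.cong[OF refl])
      fix j0 assume j0: "j0 \<in> {..<n}"
      have ij: "inv \<sigma> j0 < n" using permutes_in_image[OF permutes_inv[OF s]] j0 by simp
      have "U 0 j0 * cnj (U 0 (inv \<sigma> j0)) = 1 / of_nat n" using U0_prod[of n U j0 "inv \<sigma> j0", OF n row _ ij] j0 by simp
      moreover have "(\<Prod>k\<in>{..<n}-{j0}. \<Sum>i\<in>{..<n}-{0}. U i k * cnj (U i (inv \<sigma> k))) =
           (\<Prod>k\<in>{..<n}-{j0}. ((if \<sigma> k = k then 1 else 0) - 1 / of_nat n))"
        by (intro prod.cong refl a_eval[OF U n row s]) simp
      ultimately show "(U 0 j0 * cnj (U 0 (inv \<sigma> j0))) * (\<Prod>k\<in>{..<n}-{j0}. \<Sum>i\<in>{..<n}-{0}. U i k * cnj (U i (inv \<sigma> k)))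
          = (1 / of_nat n) * (\<Prod>k\<in>{..<n}-{j0}. ((if \<sigma> k = k then 1 else 0) - 1 / of_nat n))" by simp
    qed
    finally show "(\<Sum>f\<in>S1. PP U n f * cnj (PP U n (f \<circ> \<sigma>))) =
        (\<Sum>j0<n. (1 / of_nat n) * (\<Prod>k\<in>{..<n}-{j0}. ((if \<sigma> k = k then 1 else 0) - 1 / of_nat n)))" .
  qed
  also have "\<dots> = (\<Sum>j0<n. (1 / of_nat n) * (\<Sum>\<sigma>\<in>Pm. \<Prod>k\<in>{..<n}-{j0}. ((if \<sigma> k = k then 1 else 0) - 1 / of_nat n)))"
    by (subst sum.swap) (simp add: sum_distrib_left)
  also have "\<dots> = (\<Sum>j0<n. (1 / of_nat n) * complex_of_real (VV n))"
    unfolding Pm_def by (intro sum.cong refl) (simp add: perm_sum[OF n])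
  also have "\<dots> = complex_of_real (VV n)" using n by simp
  finally show ?thesis by simp
qed


lemma power_exp_int:
  "has_bochner_integral lborel (\<lambda>x::real. indicator {0..} x * (x^k * exp (-x))) (fact k)"
proof -
  have "(\<lambda>x::real. indicator {0..} x * (x^k * exp (-x))) = (\<lambda>x. x^k * exp (-x) * indicator {0..} x)"
    by (auto simp: fun_eq_iff)
  moreover have "has_bochner_integral lborel (\<lambda>x::real. x^k * exp (-x) * indicator {0..} x) (fact k)"
  proof (rule has_bochner_integral_nn_integral)
    show "(\<lambda>x::real. x^k * exp (-x) * indicator {0..} x) \<in> borel_measurable lborel" by measurable
    show "AE x in lborel. 0 \<le> (x::real) ^ k * exp (- x) * indicator {0..} x"
      by (auto split: split_indicator)
    show "(0::real) \<le> fact k" by simp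
    have "(\<integral>\<^sup>+x. ennreal (x^k * exp (-x) * indicator {0..} x) \<partial>lborel) = 
          (\<integral>\<^sup>+x. ennreal (x^k * exp (-x)) * indicator {0 ..} x \<partial>lborel)"
      by (intro nn_integral_cong) (auto split: split_indicator)
    also have "\<dots> = ennreal (fact k)" using nn_intergal_power_times_exp_Ici[of k]
      by (simp add: ennreal_of_nat_eq_real_of_nat)
    finally show "(\<integral>\<^sup>+x. ennreal (x^k * exp (-x) * indicator {0..} x) \<partial>lborel) = ennreal (fact k)"
      .
  qed
  ultimately show ?thesis by simp
qed

lemma x_exp_int:
  assumes l: "0 < (l::real)"
  shows "has_bochner_integral lborel (\<lambda>x::real. indicator {0..} x * (x * exp (-(l*x)))) (1/l^2)"
proof -
  have "has_bochner_integral lborel (\<lambda>x::real. erlang_density 0 l x * x ^ 1) (1 / l)"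
  proof (rule has_bochner_integral_nn_integral)
    show "(\<lambda>x::real. erlang_density 0 l x * x ^ 1) \<in> borel_measurable lborel" by measurable
    show "AE x in lborel. 0 \<le> erlang_density 0 l x * x ^ 1"
      using l by (auto simp: erlang_density_def)
    show "0 \<le> 1/l" using l by simp
    show "(\<integral>\<^sup>+x. ennreal (erlang_density 0 l x * x ^ 1) \<partial>lborel) = ennreal (1/l)"
      using nn_integral_erlang_ith_moment[OF l, of 0 1] by simp
  qed
  then have "has_bochner_integral lborel (\<lambda>x::real. (1/l) * (erlang_density 0 l x * x ^ 1)) ((1/l) * (1 / l))"
    by (rule has_bochner_integral_mult_right)
  moreover have "(\<lambda>x::real. (1/l) * (erlang_density 0 l x * x ^ 1)) = (\<lambda>x::real. indicator {0..} x * (x * exp (-(l*x))))"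
    using l by (auto simp: fun_eq_iff erlang_density_def split: split_indicator)
  ultimately show ?thesis by (simp add: power2_eq_square)
qed

definition hh :: "nat \<Rightarrow> real" where
  "hh n = (\<Sum>t<n. real ((n-1) choose t) * fact (t+1) * (-1/real n)^t)"

lemma hh_int:
  assumes n: "n \<ge> 1"
  shows "has_bochner_integral lborel (\<lambda>x::real. indicator {0..} x * (x * exp (-x) * (1 - x / real n)^(n-1))) (hh n)"
proof -
  have eq: "(\<lambda>x::real. indicator {0..} x * (x * exp (-x) * (1 - x / real n)^(n-1))) =
     (\<lambda>x. \<Sum>t<n. (real ((n-1) choose t) * (-1/real n)^t) * (indicator {0..} x * (x^(t+1) * exp (-x))))"
  proof
    fix x :: real
    have "(1 - x / real n)^(n-1) = ((-x/real n) + 1)^(n-1)" by simp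
    also have "\<dots> = (\<Sum>t\<le>n-1. real ((n-1) choose t) * (-x/real n)^t * 1^(n-1-t))"
      by (rule binomial_ring)
    also have "{..n-1} = {..<n}" using n by auto
    finally have b: "(1 - x / real n)^(n-1) = (\<Sum>t<n. real ((n-1) choose t) * (-x/real n)^t)" by simp
    show "indicator {0..} x * (x * exp (-x) * (1 - x / real n)^(n-1)) =
      (\<Sum>t<n. (real ((n-1) choose t) * (-1/real n)^t) * (indicator {0..} x * (x^(t+1) * exp (-x))))"
      unfolding b sum_distrib_left sum_distrib_right
      by (intro sum.cong refl) (simp add: power_mult_distrib[symmetric] algebra_simps)
  qed
  have "has_bochner_integral lborel
     (\<lambda>x. \<Sum>t<n. (real ((n-1) choose t) * (-1/real n)^t) * (indicator {0..} x * (x^(t+1) * exp (-x))))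
     (\<Sum>t<n. (real ((n-1) choose t) * (-1/real n)^t) * fact (t+1))"
    by (intro has_bochner_integral_sum has_bochner_integral_mult_right power_exp_int)
  moreover have "(\<Sum>t<n. (real ((n-1) choose t) * (-1/real n)^t) * fact (t+1)) = hh n"
    unfolding hh_def by (intro sum.cong refl) simp
  ultimately show ?thesis using eq by simp
qed

lemma abs_one_minus_le: assumes "0 \<le> (z::real)" shows "\<bar>1 - z\<bar> \<le> exp (z/2)"
proof -
  have "1 + z/2 + (z/2)\<^sup>2/2 \<le> exp (z/2)" using assms by (intro exp_lower_Taylor_quadratic) simp
  moreover have "\<bar>1 - z\<bar> \<le> 1 + z/2 + (z/2)\<^sup>2/2"
  proof (cases "z \<le> 1")
    case True
    have "0 \<le> (z/2)\<^sup>2/2" by simp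
    moreover have "\<bar>1 - z\<bar> = 1 - z" using True by simp
    ultimately show ?thesis using assms by linarith
  next
    case False
    have "0 \<le> (z-2)\<^sup>2/8 + 3/2" by simp
    then show ?thesis using False by (simp add: abs_if power2_eq_square algebra_simps) argo
  qed
  ultimately show ?thesis by linarith
qed

lemma pow_bound:
  assumes "0 \<le> (x::real)"
  shows "\<bar>(1 - x / real (Suc i))^i\<bar> \<le> exp (x/2)"
proof -
  have "\<bar>(1 - x / real (Suc i))^i\<bar> = \<bar>1 - x / real (Suc i)\<bar>^i" by (simp add: power_abs)
  also have "\<dots> \<le> (exp (x / real (Suc i) / 2))^i"
    by (intro power_mono abs_one_minus_le) (use assms in auto)
  also have "\<dots> = exp (real i * (x / real (Suc i) / 2))" by (rule exp_of_nat_mult[symmetric])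
  also have "\<dots> \<le> exp (x/2)"
  proof -
    have "real i * (x / real (Suc i) / 2) = (real i / real (Suc i)) * (x/2)" by simp
    also have "\<dots> \<le> 1 * (x/2)" by (intro mult_right_mono) (use assms in auto)
    finally show ?thesis by simp
  qed
  finally show ?thesis .
qed

lemma pow_lim:
  "(\<lambda>i. (1 - x / real (Suc i))^i) \<longlonglongrightarrow> exp (-x)"
proof -
  have a: "(\<lambda>i. (1 - x / real (Suc i))^(Suc i)) \<longlonglongrightarrow> exp (-x)"
    using LIMSEQ_Suc[OF tendsto_exp_limit_sequentially[of "-x"]] by simp
  have "(\<lambda>i. 1 - x * inverse (real (Suc i))) \<longlonglongrightarrow> 1 - x * 0"
    by (intro tendsto_diff tendsto_const tendsto_mult LIMSEQ_inverse_real_of_nat)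
  then have b: "(\<lambda>i. 1 - x / real (Suc i)) \<longlonglongrightarrow> 1 - x * 0" by (simp add: divide_inverse)
  have "(\<lambda>i. (1 - x / real (Suc i))^(Suc i) / (1 - x / real (Suc i))) \<longlonglongrightarrow> exp (-x) / (1 - x*0)"
    using b by (intro tendsto_divide a) auto
  then have c: "(\<lambda>i. (1 - x / real (Suc i))^(Suc i) / (1 - x / real (Suc i))) \<longlonglongrightarrow> exp (-x)" by simp
  show ?thesis
  proof (rule Lim_transform_eventually[OF c])
    obtain N :: nat where N: "\<bar>x\<bar> < real N" using reals_Archimedean2 by blast
    show "\<forall>\<^sub>F i in sequentially. (1 - x / real (Suc i)) ^ Suc i / (1 - x / real (Suc i)) = (1 - x / real (Suc i)) ^ i"
      unfolding eventually_sequentially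
    proof (intro exI allI impI)
      fix i assume "N \<le> i"
      then have "x \<noteq> real (Suc i)" using N by auto
      then have "1 - x / real (Suc i) \<noteq> 0" by (simp add: field_simps)
      then show "(1 - x / real (Suc i)) ^ Suc i / (1 - x / real (Suc i)) = (1 - x / real (Suc i)) ^ i"
        by simp
    qed
  qed
qed

lemma hh_lim: "hh \<longlonglongrightarrow> 1/4"
proof -
  let ?s = "\<lambda>i (x::real). indicator {0..} x * (x * exp (-x) * (1 - x / real (Suc i))^(Suc i - 1))"
  let ?f = "\<lambda>x::real. indicator {0..} x * (x * exp (-(2*x)))"
  let ?w = "\<lambda>x::real. indicator {0..} x * (x * exp (-((1/2)*x)))"
  have wi: "integrable lborel ?w" using x_exp_int[of "1/2"] by (auto simp: has_bochner_integral_iff)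
  have fi: "has_bochner_integral lborel ?f (1/4)" using x_exp_int[of 2] by (simp add: power2_eq_square)
  have "(\<lambda>i. integral\<^sup>L lborel (?s i)) \<longlonglongrightarrow> integral\<^sup>L lborel ?f"
  proof (rule integral_dominated_convergence[where w = ?w])
    show "?f \<in> borel_measurable lborel" by measurable
    show "?s i \<in> borel_measurable lborel" for i by measurable
    show "integrable lborel ?w" by (rule wi)
    show "AE x in lborel. (\<lambda>i. ?s i x) \<longlonglongrightarrow> ?f x"
    proof (rule AE_I2)
      fix x :: real
      have "(\<lambda>i. indicator {0..} x * (x * exp (-x) * (1 - x / real (Suc i))^i)) \<longlonglongrightarrow>
               indicator {0..} x * (x * exp (-x) * exp (-x))"
        by (intro tendsto_intros pow_lim)
      moreover have "exp (-x) * exp (-x) = exp (-(2*x))" by (simp add: exp_add[symmetric])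
      ultimately show "(\<lambda>i. ?s i x) \<longlonglongrightarrow> ?f x" by (simp add: mult.assoc)
    qed
    show "AE x in lborel. norm (?s i x) \<le> ?w x" for i
    proof (rule AE_I2)
      fix x :: real
      show "norm (?s i x) \<le> ?w x"
      proof (cases "0 \<le> x")
        case True
        have "norm (?s i x) = x * exp (-x) * \<bar>(1 - x / real (Suc i))^i\<bar>"
          using True by (simp add: abs_mult)
        also have "\<dots> \<le> x * exp (-x) * exp (x/2)"
          by (intro mult_left_mono pow_bound) (use True in auto)
        also have "\<dots> = ?w x" using True by (simp add: mult.assoc exp_add[symmetric])
        finally show ?thesis .
      qed simp
    qed
  qed
  moreover have "integral\<^sup>L lborel (?s i) = hh (Suc i)" for i
    using hh_int[of "Suc i"] by (simp add: has_bochner_integral_iff)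
  moreover have "integral\<^sup>L lborel ?f = 1/4" using fi by (simp add: has_bochner_integral_iff)
  ultimately have "(\<lambda>i. hh (Suc i)) \<longlonglongrightarrow> 1/4" by simp
  then show ?thesis by (rule LIMSEQ_imp_Suc)
qed

lemma choose_fact_real:
  assumes "m \<le> k"
  shows "real (k choose m) = fact k / (fact m * fact (k - m))"
  using binomial_fact[OF assms] by simp

lemma VV_hh: assumes n: "n \<ge> 1" shows "VV n = hh n"
proof -
  have "VV n = (\<Sum>m<n. real ((n-1) choose m) * fact (n-m) * (-1/real n)^(n-1-m))"
    unfolding VV_def using n by (intro sum.cong) auto
  also have "\<dots> = (\<Sum>t<n. real ((n-1) choose (n - Suc t)) * fact (n-(n - Suc t)) * (-1/real n)^(n-1-(n - Suc t)))"
    by (rule sum.nat_diff_reindex[symmetric])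
  also have "\<dots> = hh n"
    unfolding hh_def
  proof (intro sum.cong refl)
    fix t assume t: "t \<in> {..<n}"
    have "(n-1) choose (n - Suc t) = (n-1) choose t"
      using t binomial_symmetric[of t "n-1"] by simp
    moreover have "n - (n - Suc t) = t + 1" "n - 1 - (n - Suc t) = t" using t by auto
    ultimately show "real ((n-1) choose (n - Suc t)) * fact (n-(n - Suc t)) * (-1/real n)^(n-1-(n - Suc t))
        = real ((n-1) choose t) * fact (t+1) * (-1/real n)^t" by simp
  qed
  finally show ?thesis .
qed

lemma VV_formula:
  assumes n: "n \<ge> 1"
  shows "VV n = (-1 / real n) ^ (n - 1) * fact (n - 1) * (\<Sum>t<n. real (n - t) * (- real n) ^ t / fact t)"
proof -
  have "VV n = (\<Sum>m<n. real ((n-1) choose m) * fact (n-m) * (-1/real n)^(n-1-m))"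
    unfolding VV_def using n by (intro sum.cong) auto
  also have "\<dots> = (\<Sum>t<n. (-1 / real n) ^ (n - 1) * fact (n - 1) * (real (n - t) * (- real n) ^ t / fact t))"
  proof (intro sum.cong refl)
    fix t assume t: "t \<in> {..<n}"
    then have tle: "t \<le> n - 1" by simp
    have nz: "real n \<noteq> 0" using n by simp
    have c: "real ((n-1) choose t) = fact (n-1) / (fact t * fact (n - 1 - t))"
      by (rule choose_fact_real[OF tle])
    have f: "(fact (n - t) :: real) = real (n - t) * fact (n - 1 - t)"
    proof -
      have "n - t = Suc (n - 1 - t)" using t by auto
      then show ?thesis by (simp add: fact_Suc)
    qed
    have p: "(-1 / real n) ^ (n - 1) = (-1/real n)^(n-1-t) * (-1/real n)^t"
    proof -
      have e: "n - 1 = (n-1-t) + t" using tle by simp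
      have "(-1 / real n) ^ (n - 1) = (-1 / real n) ^ ((n-1-t) + t)" using e by (rule arg_cong)
      then show ?thesis by (simp only: power_add)
    qed
    have q: "(-1/real n)^t * (- real n) ^ t = 1"
      using nz by (simp add: power_mult_distrib[symmetric])
    have "(-1 / real n) ^ (n - 1) * fact (n - 1) * (real (n - t) * (- real n) ^ t / fact t)
       = (-1/real n)^(n-1-t) * ((-1/real n)^t * (- real n) ^ t) * fact (n - 1) * real (n - t) / fact t"
      unfolding p by (simp add: algebra_simps)
    also have "\<dots> = (-1/real n)^(n-1-t) * fact (n - 1) * real (n - t) / fact t" unfolding q by simp
    also have "\<dots> = real ((n-1) choose t) * fact (n-t) * (-1/real n)^(n-1-t)"
      unfolding c f by (simp add: field_simps)
    finally show "real ((n-1) choose t) * fact (n-t) * (-1/real n)^(n-1-t) =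
       (-1 / real n) ^ (n - 1) * fact (n - 1) * (real (n - t) * (- real n) ^ t / fact t)" by simp
  qed
  also have "\<dots> = (-1 / real n) ^ (n - 1) * fact (n - 1) * (\<Sum>t<n. real (n - t) * (- real n) ^ t / fact t)"
    by (simp add: sum_distrib_left)
  finally show ?thesis .
qed

lemma poch_neg:
  assumes "j \<le> m"
  shows "pochhammer (- real m) j = (-1)^j * fact m / fact (m - j)"
  using assms
proof (induction j)
  case 0 then show ?case by simp
next
  case (Suc j)
  then have jm: "j < m" by simp
  have f: "(fact (m - j) :: real) = real (m - j) * fact (m - Suc j)"
  proof -
    have "m - j = Suc (m - Suc j)" using jm by auto
    then show ?thesis by (simp add: fact_Suc)
  qed
  have nz: "(fact (m - Suc j) :: real) \<noteq> 0" by simp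
  have "pochhammer (- real m) (Suc j) = pochhammer (- real m) j * (- real m + real j)"
    by (simp add: pochhammer_Suc)
  also have "\<dots> = (-1)^j * fact m / fact (m - j) * (- real (m - j))"
    using Suc jm by (simp add: of_nat_diff)
  also have "\<dots> = (-1)^(Suc j) * fact m / fact (m - Suc j)"
    unfolding f using nz jm by (simp add: field_simps)
  finally show ?case .
qed

lemma poch2: "pochhammer (2::real) j = fact (j + 1)"
proof -
  have "fact (Suc j) = (pochhammer 1 (Suc j) :: real)" by (rule pochhammer_fact)
  also have "\<dots> = 1 * pochhammer (1 + 1) j" by (rule pochhammer_rec)
  finally show ?thesis by simp
qed

lemma hyp_formula:
  assumes n: "n \<ge> 1"
  shows "hyp2F0 (- (real n - 1)) 2 (1 / real n) = hh n"
proof -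
  have a: "- (real n - 1) = - real (n - 1)" using n by (simp add: of_nat_diff)
  let ?f = "\<lambda>j. pochhammer (- (real n - 1)) j * pochhammer 2 j / fact j * (1 / real n) ^ j"
  have z: "?f j = 0" if "j \<notin> {..<n}" for j
  proof -
    have "n - 1 < j" using that n by auto
    then have "pochhammer (- real (n - 1)) j = (0::real)"
      using pochhammer_of_nat_eq_0_iff[of "n-1" j] by simp
    then show ?thesis unfolding a by simp
  qed
  have "hyp2F0 (- (real n - 1)) 2 (1 / real n) = (\<Sum>j<n. ?f j)"
    unfolding hyp2F0_def by (rule suminf_finite) (use z in auto)
  also have "\<dots> = hh n"
    unfolding hh_def
  proof (intro sum.cong refl)
    fix j assume j: "j \<in> {..<n}"
    then have jle: "j \<le> n - 1" by simp
    have c: "real ((n-1) choose j) = fact (n-1) / (fact j * fact (n - 1 - j))"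
      by (rule choose_fact_real[OF jle])
    have "?f j = (-1)^j * fact (n-1) / fact (n - 1 - j) * fact (j+1) / fact j * (1 / real n) ^ j"
      unfolding a poch_neg[OF jle] poch2 by simp
    also have "\<dots> = real ((n-1) choose j) * fact (j+1) * (-1/real n)^j"
    proof -
      have r: "(-1/real n)^j = (-1)^j / real n ^ j" by (rule power_divide)
      have r2: "(1/real n)^j = 1 / real n ^ j" by (simp add: power_divide)
      show ?thesis unfolding c r r2 by (simp add: field_simps)
    qed
    finally show "?f j = real ((n-1) choose j) * fact (j+1) * (-1/real n)^j" .
  qed
  finally show ?thesis .
qed


theorem theorem3:
  shows "(\<forall>n U. n > 2 \<longrightarrow> unitary_mat n U \<longrightarrow>
            (\<forall>k<n. U 0 k = complex_of_real (1 / sqrt (real n))) \<longrightarrow>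
            heralding_rate n U =
              (-1 / real n) ^ (n - 1) * fact (n - 1) *
                (\<Sum>t<n. real (n - t) * (- real n) ^ t / fact t)
            \<and> heralding_rate n U = hyp2F0 (- (real n - 1)) 2 (1 / real n))
       \<and> (\<forall>Us :: nat \<Rightarrow> nat \<Rightarrow> nat \<Rightarrow> complex.
            (\<forall>n>2. unitary_mat n (Us n) \<and>
                   (\<forall>k<n. Us n 0 k = complex_of_real (1 / sqrt (real n)))) \<longrightarrow>
            (\<lambda>n. heralding_rate n (Us n)) \<longlonglongrightarrow> 1 / 4)"
proof (intro conjI allI impI)
  fix n U assume n2: "n > (2::nat)" and U: "unitary_mat n U"
    and row: "\<forall>k<n. U 0 k = complex_of_real (1 / sqrt (real n))"
  have n: "n \<ge> 1" using n2 by simp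
  have hv: "heralding_rate n U = VV n" by (rule main_value[OF U n row])
  show "heralding_rate n U = (-1 / real n) ^ (n - 1) * fact (n - 1) *
                (\<Sum>t<n. real (n - t) * (- real n) ^ t / fact t)"
    unfolding hv by (rule VV_formula[OF n])
  show "heralding_rate n U = hyp2F0 (- (real n - 1)) 2 (1 / real n)"
    unfolding hv VV_hh[OF n] hyp_formula[OF n] ..
next
  fix Us :: "nat \<Rightarrow> nat \<Rightarrow> nat \<Rightarrow> complex"
  assume A: "\<forall>n>2. unitary_mat n (Us n) \<and> (\<forall>k<n. Us n 0 k = complex_of_real (1 / sqrt (real n)))"
  show "(\<lambda>n. heralding_rate n (Us n)) \<longlonglongrightarrow> 1 / 4"
  proof (rule Lim_transform_eventually[OF hh_lim])
    show "\<forall>\<^sub>F n in sequentially. hh n = heralding_rate n (Us n)"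
      unfolding eventually_sequentially
    proof (intro exI allI impI)
      fix n :: nat assume "3 \<le> n"
      then have n2: "n > 2" and n: "n \<ge> 1" by auto
      have "heralding_rate n (Us n) = VV n" using main_value[of n "Us n"] A n2 n by blast
      then show "hh n = heralding_rate n (Us n)" using VV_hh[OF n] by simp
    qed
  qed
qed

end
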